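(* Every shallow star and every periodic path is unary FA-presentable.
   Context: A template is $(T,\eta,t_0,t_1)$ with $(T,\eta)$ a finite directed tree (a tree with each edge given a direction), $t_0,t_1\in T$, and $t_0$ a leaf. The graph $\mathcal{S}(T,\eta,t_0,t_1)$ is obtained from countably many disjoint copies $(T^{(j)},\eta^{(j)},t_0^{(j)},t_1^{(j)})$, $j\in\{0,1,2,\dots\}$, by identifying the vertices related by the equivalence relation generated by $\{(t_1^{(j)},t_0^{(j+1)}):j\ge 0\}$. If $t_0=t_1$ it is called a shallow star; if $t_0\ne t_1$ a periodic path. A directed graph $(X,\eta)$ is unary FA-presentable if there exist a regular language $L\subseteq a^*$ and a surjection $\phi:L\to X$ such that $\{(u,v)\in L^2:u\phi=v\phi\}$ and $\{(u,v)\in L^2:(u\phi,v\phi)\in\eta\}$ are regular relations (the words $\mathrm{conv}(u,v)$ over $\{a,\$\}^2$, reading $u,v$ in parallel with the shorter padded by $\$$, form regular languages). *)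

theory Defs
  imports Main
begin

definition regular :: "'s list set \<Rightarrow> bool" where
  "regular L \<longleftrightarrow>
     (\<exists>(Q::nat set) q0 (\<delta>::nat \<Rightarrow> 's \<Rightarrow> nat) F.
        finite Q \<and> q0 \<in> Q \<and> (\<forall>q\<in>Q. \<forall>x. \<delta> q x \<in> Q) \<and> F \<subseteq> Q \<and>
        L = {w. foldl \<delta> q0 w \<in> F})"

text \<open>Convolution of two words: read in parallel, shorter padded by the
  padding symbol None (= the symbol \$).\<close>
definition conv :: "'b list \<Rightarrow> 'b list \<Rightarrow> ('b option \<times> 'b option) list" where
  "conv u v = map (\<lambda>i. (if i < length u then Some (u ! i) else None,
                         if i < length v then Some (v ! i) else None))
                  [0..<max (length u) (length v)]"

datatype unary_letter = a

definition unary_FA_presentable :: "'x set \<Rightarrow> ('x \<times> 'x) set \<Rightarrow> bool" where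
  "unary_FA_presentable X \<eta> \<longleftrightarrow>
     (\<exists>(L::unary_letter list set) (\<phi>::unary_letter list \<Rightarrow> 'x).
        regular L \<and> \<phi> ` L = X \<and>
        regular {conv u v | u v. u \<in> L \<and> v \<in> L \<and> \<phi> u = \<phi> v} \<and>
        regular {conv u v | u v. u \<in> L \<and> v \<in> L \<and> (\<phi> u, \<phi> v) \<in> \<eta>})"

definition directed_tree :: "'a set \<Rightarrow> ('a \<times> 'a) set \<Rightarrow> bool" where
  "directed_tree T \<eta> \<longleftrightarrow>
     finite T \<and> T \<noteq> {} \<and> \<eta> \<subseteq> T \<times> T \<and> irrefl \<eta> \<and> \<eta> \<inter> \<eta>\<inverse> = {} \<and>
     (\<forall>x\<in>T. \<forall>y\<in>T. (x, y) \<in> (\<eta> \<union> \<eta>\<inverse>)\<^sup>*) \<and>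
     card \<eta> + 1 = card T"

definition leaf :: "'a set \<Rightarrow> ('a \<times> 'a) set \<Rightarrow> 'a \<Rightarrow> bool" where
  "leaf T \<eta> v \<longleftrightarrow> v \<in> T \<and> card {u \<in> T. (u, v) \<in> \<eta> \<or> (v, u) \<in> \<eta>} = 1"

definition template :: "'a set \<Rightarrow> ('a \<times> 'a) set \<Rightarrow> 'a \<Rightarrow> 'a \<Rightarrow> bool" where
  "template T \<eta> t0 t1 \<longleftrightarrow> directed_tree T \<eta> \<and> t0 \<in> T \<and> t1 \<in> T \<and> leaf T \<eta> t0"

definition shallow_star :: "'a set \<Rightarrow> ('a \<times> 'a) set \<Rightarrow> 'a \<Rightarrow> 'a \<Rightarrow> bool" where
  "shallow_star T \<eta> t0 t1 \<longleftrightarrow> template T \<eta> t0 t1 \<and> t0 = t1"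

definition periodic_path :: "'a set \<Rightarrow> ('a \<times> 'a) set \<Rightarrow> 'a \<Rightarrow> 'a \<Rightarrow> bool" where
  "periodic_path T \<eta> t0 t1 \<longleftrightarrow> template T \<eta> t0 t1 \<and> t0 \<noteq> t1"

text \<open>Copies are indexed by j :: nat; vertex t of copy j is (j, t).  The
  identification is the equivalence relation generated by
  (t1 of copy j, t0 of copy j+1).\<close>
definition S_equiv :: "'a \<Rightarrow> 'a \<Rightarrow> ((nat \<times> 'a) \<times> (nat \<times> 'a)) set" where
  "S_equiv t0 t1 = (let R = {((j, t1), (Suc j, t0)) | j. True} in (R \<union> R\<inverse>)\<^sup>*)"

definition S_vertices :: "'a set \<Rightarrow> 'a \<Rightarrow> 'a \<Rightarrow> (nat \<times> 'a) set set" where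
  "S_vertices T t0 t1 = (UNIV \<times> T) // S_equiv t0 t1"

definition S_edges :: "('a \<times> 'a) set \<Rightarrow> 'a \<Rightarrow> 'a \<Rightarrow> ((nat \<times> 'a) set \<times> (nat \<times> 'a) set) set" where
  "S_edges \<eta> t0 t1 =
     {(S_equiv t0 t1 `` {(j, u)}, S_equiv t0 t1 `` {(j, v)}) | j u v. (u, v) \<in> \<eta>}"

end

theory Submission
  imports Defs
begin


lemma regular_fin_type:
  fixes Q :: "'q set" and \<delta> :: "'q \<Rightarrow> 's \<Rightarrow> 'q"
  assumes fQ: "finite Q" and q0: "q0 \<in> Q" and cl: "\<forall>q\<in>Q. \<forall>x. \<delta> q x \<in> Q" and FQ: "F \<subseteq> Q"
    and L: "L = {w. foldl \<delta> q0 w \<in> F}"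
  shows "regular L"
proof -
  obtain n :: nat and f where Qf: "Q = f ` {i. i < n}" and inj: "inj_on f {i. i < n}"
    using finite_imp_nat_seg_image_inj_on[OF fQ] by blast
  define g where "g = inv_into {i. i < n} f"
  have gQ: "g q < n" if "q \<in> Q" for q
    using that unfolding g_def Qf by (metis inv_into_into mem_Collect_eq)
  have fg: "f (g q) = q" if "q \<in> Q" for q
    using that unfolding g_def Qf by (simp add: f_inv_into_f)
  have ginj: "g q = g q' \<longleftrightarrow> q = q'" if "q \<in> Q" "q' \<in> Q" for q q'
    using fg that by metis
  define \<delta>' where "\<delta>' = (\<lambda>i x. if i < n then g (\<delta> (f i) x) else g q0)"
  have fQi: "f i \<in> Q" if "i < n" for i using that Qf by auto
  have run: "foldl \<delta>' (g q) w = g (foldl \<delta> q w) \<and> foldl \<delta> q w \<in> Q" if "q \<in> Q" for q w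
    using that
  proof (induction w arbitrary: q)
    case Nil then show ?case by simp
  next
    case (Cons x w)
    have "\<delta>' (g q) x = g (\<delta> q x)" using Cons.prems gQ fg by (simp add: \<delta>'_def)
    moreover have "\<delta> q x \<in> Q" using cl Cons.prems by blast
    ultimately show ?case using Cons.IH by simp
  qed
  show ?thesis unfolding regular_def
  proof (intro exI conjI)
    show "finite {i. i < n}" by simp
    show "g q0 \<in> {i. i < n}" using gQ q0 by simp
    show "\<forall>q\<in>{i. i < n}. \<forall>x. \<delta>' q x \<in> {i. i < n}"
      using gQ cl fQi q0 by (auto simp: \<delta>'_def)
    show "g ` F \<subseteq> {i. i < n}" using gQ FQ by auto
    show "L = {w. foldl \<delta>' (g q0) w \<in> g ` F}"
    proof -
      have "foldl \<delta> q0 w \<in> F \<longleftrightarrow> foldl \<delta>' (g q0) w \<in> g ` F" for w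
      proof -
        have r: "foldl \<delta>' (g q0) w = g (foldl \<delta> q0 w)" "foldl \<delta> q0 w \<in> Q" using run[OF q0] by auto
        show ?thesis unfolding r(1) using ginj r(2) FQ by auto
      qed
      then show ?thesis unfolding L by auto
    qed
  qed
qed




lemma conv_Cons: "conv (x#u) (y#v) = (Some x, Some y) # conv u v"
proof -
  have "max (length (x#u)) (length (y#v)) = Suc (max (length u) (length v))" by simp
  then have "[0..<max (length (x#u)) (length (y#v))] = 0 # map Suc [0..<max (length u) (length v)]"
    by (simp only: upt_conv_Cons zero_less_Suc map_Suc_upt)
  then show ?thesis unfolding conv_def by simp
qed

lemma conv_Nil1: "conv [] v = map (\<lambda>y. (None, Some y)) v"
  unfolding conv_def by (rule nth_equalityI) auto

lemma conv_Nil2: "conv u [] = map (\<lambda>x. (Some x, None)) u"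
  unfolding conv_def by (rule nth_equalityI) auto

abbreviation "SS \<equiv> (Some a, Some a)"
abbreviation "SN \<equiv> (Some a, None :: unary_letter option)"
abbreviation "NS \<equiv> (None :: unary_letter option, Some a)"

definition cv :: "nat \<Rightarrow> nat \<Rightarrow> (unary_letter option \<times> unary_letter option) list" where
  "cv k l = replicate (min k l) SS @ replicate (k - l) SN @ replicate (l - k) NS"

lemma conv_rep: "conv (replicate k a) (replicate l a) = cv k l"
proof (induction k arbitrary: l)
  case 0 then show ?case by (simp add: cv_def conv_Nil1 map_replicate_const)
next
  case (Suc k)
  then show ?case
  proof (cases l)
    case 0 then show ?thesis by (simp add: cv_def conv_Nil2 map_replicate_const del: replicate_Suc)
  next
    case (Suc l') then show ?thesis using Suc.IH by (simp add: cv_def conv_Cons)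
  qed
qed

lemma unary_rep: "(u :: unary_letter list) = replicate (length u) a"
  by (metis replicate_length_same unary_letter.exhaust)

definition cyc :: "nat \<Rightarrow> nat \<Rightarrow> nat \<Rightarrow> nat" where
  "cyc N p x = (if x < N then x else N + x mod p)"

lemma cyc_step: assumes "p dvd N" shows "cyc N p (cyc N p x + 1) = cyc N p (x + 1)"
proof -
  have "(N + x mod p + 1) mod p = (x + 1) mod p"
  proof -
    have "(N + x mod p + 1) mod p = (N + (x + 1)) mod p" by (metis add.assoc add.commute mod_add_left_eq)
    also have "\<dots> = (x + 1) mod p" 
    proof -
      have "(N + (x + 1)) mod p = (N mod p + (x + 1)) mod p" by (rule mod_add_left_eq[symmetric])
      then show ?thesis using assms by simp
    qed
    finally show ?thesis .
  qed
  then show ?thesis unfolding cyc_def by auto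
qed

lemma cyc_0: "0 < N \<Longrightarrow> cyc N p x = 0 \<longleftrightarrow> x = 0"
  unfolding cyc_def by auto

lemma cyc_lt: "0 < p \<Longrightarrow> cyc N p x < N + p"
  unfolding cyc_def by auto

lemma cyc_eq: "cyc N p x = cyc N p y \<longleftrightarrow> x = y \<or> (N \<le> x \<and> N \<le> y \<and> x mod p = y mod p)"
  unfolding cyc_def by auto




definition key :: "nat \<Rightarrow> nat \<Rightarrow> nat \<Rightarrow> nat \<Rightarrow> nat \<times> nat \<times> nat" where
  "key N p k l = (cyc N p (min k l), cyc N p (k - l), cyc N p (l - k))"

definition dstep :: "nat \<Rightarrow> nat \<Rightarrow> (nat \<times> nat \<times> nat) option \<Rightarrow> unary_letter option \<times> unary_letter option
    \<Rightarrow> (nat \<times> nat \<times> nat) option" where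
  "dstep N p q s = (case q of None \<Rightarrow> None | Some (c1, c2, c3) \<Rightarrow>
     (if s = SS then (if c2 = 0 \<and> c3 = 0 then Some (cyc N p (c1 + 1), c2, c3) else None)
      else if s = SN then (if c3 = 0 then Some (c1, cyc N p (c2 + 1), c3) else None)
      else if s = NS then (if c2 = 0 then Some (c1, c2, cyc N p (c3 + 1)) else None)
      else None))"

context
  fixes N p :: nat
  assumes p0: "0 < p" and pN: "p dvd N" and N0: "0 < N"
begin

lemma run_SS: "foldl (dstep N p) (Some (cyc N p x, 0, 0)) (replicate n SS) = Some (cyc N p (x + n), 0, 0)"
  proof (induction n arbitrary: x)
  case 0 then show ?case by simp
next
  case (Suc n)
  have "dstep N p (Some (cyc N p x, 0, 0)) SS = Some (cyc N p (x + 1), 0, 0)"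
    using cyc_step[OF pN, of x] by (simp add: dstep_def)
  then show ?case using Suc.IH[of "x + 1"] by simp
qed

lemma run_SN: "foldl (dstep N p) (Some (c, cyc N p x, 0)) (replicate n SN) = Some (c, cyc N p (x + n), 0)"
  proof (induction n arbitrary: x)
  case 0 then show ?case by simp
next
  case (Suc n)
  have "dstep N p (Some (c, cyc N p x, 0)) SN = Some (c, cyc N p (x + 1), 0)"
    using cyc_step[OF pN, of x] by (simp add: dstep_def)
  then show ?case using Suc.IH[of "x + 1"] by simp
qed

lemma run_NS: "foldl (dstep N p) (Some (c, 0, cyc N p x)) (replicate n NS) = Some (c, 0, cyc N p (x + n))"
  proof (induction n arbitrary: x)
  case 0 then show ?case by simp
next
  case (Suc n)
  have "dstep N p (Some (c, 0, cyc N p x)) NS = Some (c, 0, cyc N p (x + 1))"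
    using cyc_step[OF pN, of x] by (simp add: dstep_def)
  then show ?case using Suc.IH[of "x + 1"] by simp
qed

lemma cyc00: "cyc N p 0 = 0" using cyc_0[OF N0] by simp

lemma run_cv: "foldl (dstep N p) (Some (0, 0, 0)) (cv k l) = Some (key N p k l)"
proof -
  have s1: "foldl (dstep N p) (Some (0, 0, 0)) (replicate (min k l) SS) = Some (cyc N p (min k l), 0, 0)"
    using run_SS[of 0 "min k l"] cyc00 by simp
  show ?thesis
  proof (cases "l \<le> k")
    case True
    have "foldl (dstep N p) (Some (cyc N p (min k l), 0, 0)) (replicate (k - l) SN) = Some (cyc N p (min k l), cyc N p (k - l), 0)"
      using run_SN[of "cyc N p (min k l)" 0 "k - l"] cyc00 by simp
    then show ?thesis using True s1 cyc00 by (simp add: cv_def key_def)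
  next
    case False
    have "foldl (dstep N p) (Some (cyc N p (min k l), 0, 0)) (replicate (l - k) NS) = Some (cyc N p (min k l), 0, cyc N p (l - k))"
      using run_NS[of "cyc N p (min k l)" 0 "l - k"] cyc00 by simp
    then show ?thesis using False s1 cyc00 by (simp add: cv_def key_def)
  qed
qed

lemma run_some: "foldl (dstep N p) (Some (0, 0, 0)) w = Some c \<Longrightarrow> \<exists>k l. w = cv k l"
proof (induction w arbitrary: c rule: rev_induct)
  case Nil then show ?case by (metis cv_def append_Nil diff_self_eq_0 min.idem replicate_0)
next
  case (snoc s w)
  have fa: "foldl (dstep N p) (Some (0, 0, 0)) (w @ [s]) = dstep N p (foldl (dstep N p) (Some (0, 0, 0)) w) s"
    by simp
  obtain c' where c': "foldl (dstep N p) (Some (0, 0, 0)) w = Some c'"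
    using snoc.prems unfolding fa by (cases "foldl (dstep N p) (Some (0, 0, 0)) w") (auto simp: dstep_def)
  then obtain k l where w: "w = cv k l" using snoc.IH by blast
  then have c'k: "c' = key N p k l" using c' run_cv by simp
  have ds: "dstep N p (Some c') s = Some c" using snoc.prems c' by simp
  obtain s1 s2 where s: "s = (s1, s2)" by force
  show ?case
  proof (cases s1)
    case None
    show ?thesis
    proof (cases s2)
      case None then show ?thesis using ds s \<open>s1 = None\<close> by (auto simp: dstep_def split: prod.splits)
    next
      case (Some y)
      then have "s = NS" using s None by (cases y) simp
      then have "k - l = 0" using ds c'k by (auto simp: dstep_def key_def cyc_0[OF N0] split: if_splits)
      then have "w @ [s] = cv k (Suc l)" using w \<open>s = NS\<close>
        by (simp add: cv_def replicate_append_same Suc_diff_le min_def)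
      then show ?thesis by blast
    qed
  next
    case (Some x)
    then have sx: "s1 = Some a" by (cases x) simp
    show ?thesis
    proof (cases s2)
      case None
      then have "s = SN" using s sx by simp
      then have "l - k = 0" using ds c'k by (auto simp: dstep_def key_def cyc_0[OF N0] split: if_splits)
      then have "w @ [s] = cv (Suc k) l" using w \<open>s = SN\<close>
        by (simp add: cv_def replicate_append_same Suc_diff_le min_def)
      then show ?thesis by blast
    next
      case (Some y)
      then have "s = SS" using s sx by (cases y) simp
      then have "k = l" using ds c'k by (auto simp: dstep_def key_def cyc_0[OF N0] split: if_splits)
      then have "w @ [s] = cv (Suc k) (Suc l)" using w \<open>s = SS\<close>
        by (simp add: cv_def replicate_append_same)
      then show ?thesis by blast
    qed
  qed
qed

lemma regular_cv:
  assumes inv: "\<And>k l k' l'. key N p k l = key N p k' l' \<Longrightarrow> P k l \<Longrightarrow> P k' l'"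
  shows "regular {cv k l | k l. P k l}"
proof (rule regular_fin_type)
  let ?B = "{..<N + p} \<times> {..<N + p} \<times> {..<N + p}"
  show "finite (insert None (Some ` ?B))" by simp
  show "Some (0, 0, 0) \<in> insert None (Some ` ?B)" using p0 by auto
  show "\<forall>q\<in>insert None (Some ` ?B). \<forall>x. dstep N p q x \<in> insert None (Some ` ?B)"
    using cyc_lt[OF p0] by (auto simp: dstep_def)
  show "Some ` {key N p k l | k l. P k l} \<subseteq> insert None (Some ` ?B)"
    using cyc_lt[OF p0] by (auto simp: key_def)
  show "{cv k l |k l. P k l} = {w. foldl (dstep N p) (Some (0, 0, 0)) w \<in> Some ` {key N p k l |k l. P k l}}"
  proof (intro set_eqI iffI)
    fix w assume "w \<in> {cv k l |k l. P k l}"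
    then show "w \<in> {w. foldl (dstep N p) (Some (0, 0, 0)) w \<in> Some ` {key N p k l |k l. P k l}}"
      using run_cv by auto
  next
    fix w assume "w \<in> {w. foldl (dstep N p) (Some (0, 0, 0)) w \<in> Some ` {key N p k l |k l. P k l}}"
    then obtain k l where kl: "P k l" "foldl (dstep N p) (Some (0, 0, 0)) w = Some (key N p k l)" by auto
    then obtain k' l' where w: "w = cv k' l'" using run_some by blast
    then have "key N p k l = key N p k' l'" using kl run_cv by simp
    then show "w \<in> {cv k l |k l. P k l}" using inv kl w by blast
  qed
qed

end



definition Erel :: "'a \<Rightarrow> 'a \<Rightarrow> ((nat \<times> 'a) \<times> (nat \<times> 'a)) set" where
  "Erel t0 t1 = {((i, t), (i', t')). (i, t) = (i', t') \<or> (t = t1 \<and> t' = t0 \<and> i' = Suc i)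
      \<or> (t = t0 \<and> t' = t1 \<and> i = Suc i') \<or> (t0 = t1 \<and> t = t0 \<and> t' = t0)}"

lemma shallow_chain:
  assumes "t0 = t1"
  shows "((i, t0), (i + d, t0)) \<in> ({((j, t1), (Suc j, t0)) | j. True} \<union> {((j, t1), (Suc j, t0)) | j. True}\<inverse>)\<^sup>*"
proof (induction d)
  case 0 then show ?case by simp
next
  case (Suc d)
  have "((i + d, t0), (i + Suc d, t0)) \<in> {((j, t1), (Suc j, t0)) | j. True}" using assms by simp
  then show ?case using Suc.IH by (meson UnI1 rtrancl.rtrancl_into_rtrancl)
qed

lemma S_equiv_char: "S_equiv t0 t1 = Erel t0 t1"
proof -
  define R where "R = {((j, t1), (Suc j, t0)) | j. True}"
  have S: "S_equiv t0 t1 = (R \<union> R\<inverse>)\<^sup>*" unfolding S_equiv_def R_def Let_def by simp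
  have sub1: "(x, y) \<in> Erel t0 t1" if "(x, y) \<in> (R \<union> R\<inverse>)\<^sup>*" for x y
    using that
  proof (induction rule: rtrancl_induct)
    case base then show ?case by (cases x) (simp add: Erel_def)
  next
    case (step y z)
    then show ?case
      by (cases x; cases y; cases z) (auto simp: Erel_def R_def)
  qed
  have sub2: "(x, y) \<in> (R \<union> R\<inverse>)\<^sup>*" if mem: "(x, y) \<in> Erel t0 t1" for x y
  proof -
    obtain i t i' t' where xy: "x = (i, t)" "y = (i', t')" by force
    have symR: "sym ((R \<union> R\<inverse>)\<^sup>*)" by (rule sym_rtrancl) (auto simp: sym_def)
    have ch: "((i, t0), (i', t0)) \<in> (R \<union> R\<inverse>)\<^sup>*" if "t0 = t1" for i i'
    proof (cases "i \<le> i'")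
      case True
      then show ?thesis using shallow_chain[OF that, of i "i' - i"] unfolding R_def by simp
    next
      case False
      then have "((i', t0), (i, t0)) \<in> (R \<union> R\<inverse>)\<^sup>*"
        using shallow_chain[OF that, of i' "i - i'"] unfolding R_def by simp
      then show ?thesis using symR by (meson symD)
    qed
    consider "(i, t) = (i', t')" | "t = t1 \<and> t' = t0 \<and> i' = Suc i" | "t = t0 \<and> t' = t1 \<and> i = Suc i'"
      | "t0 = t1 \<and> t = t0 \<and> t' = t0"
      using mem xy by (auto simp: Erel_def)
    then show ?thesis
    proof cases
      case 1 then show ?thesis using xy by simp
    next
      case 2 then have "(x, y) \<in> R" using xy by (simp add: R_def)
      then show ?thesis by blast
    next
      case 3 then have "(y, x) \<in> R" using xy by (simp add: R_def)
      then show ?thesis by blast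
    next
      case 4 then show ?thesis using xy ch by simp
    qed
  qed
  show ?thesis unfolding S using sub1 sub2 by auto
qed

lemma S_equiv_equiv: "equiv UNIV (S_equiv t0 t1)"
proof -
  define R where "R = {((j, t1), (Suc j, t0)) | j. True}"
  have "sym ((R \<union> R\<inverse>)\<^sup>*)" by (rule sym_rtrancl) (auto simp: sym_def)
  then have "equiv UNIV ((R \<union> R\<inverse>)\<^sup>*)"
    by (intro equivI) (auto simp: refl_rtrancl trans_rtrancl)
  then show ?thesis unfolding S_equiv_def R_def Let_def by simp
qed

lemma Erel_shift: "((Suc i, t), (Suc i', t')) \<in> Erel t0 t1 \<longleftrightarrow> ((i, t), (i', t')) \<in> Erel t0 t1"
  by (auto simp: Erel_def)




definition pp :: "(nat \<Rightarrow> 'a) \<Rightarrow> nat \<Rightarrow> 'a \<Rightarrow> nat \<Rightarrow> nat \<times> 'a" where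
  "pp e m t0 k = (if k = 0 then (0, t0) else ((k - 1) div m, e ((k - 1) mod m)))"

definition edge :: "('a \<times> 'a) set \<Rightarrow> (nat \<Rightarrow> 'a) \<Rightarrow> nat \<Rightarrow> 'a \<Rightarrow> 'a \<Rightarrow> nat \<Rightarrow> nat \<Rightarrow> bool" where
  "edge \<eta> e m t0 t1 k l \<longleftrightarrow> (\<exists>j u v. (u, v) \<in> \<eta> \<and> (pp e m t0 k, (j, u)) \<in> Erel t0 t1 \<and> (pp e m t0 l, (j, v)) \<in> Erel t0 t1)"

lemma edge_iff: "(S_equiv t0 t1 `` {x}, S_equiv t0 t1 `` {y}) \<in> S_edges \<eta> t0 t1 \<longleftrightarrow>
   (\<exists>j u v. (u, v) \<in> \<eta> \<and> (x, (j, u)) \<in> Erel t0 t1 \<and> (y, (j, v)) \<in> Erel t0 t1)"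
proof -
  have c0: "S_equiv t0 t1 `` {z} = S_equiv t0 t1 `` {z'} \<longleftrightarrow> (z, z') \<in> S_equiv t0 t1" for z z'
    by (rule eq_equiv_class_iff[OF S_equiv_equiv]) simp_all
  have c: "S_equiv t0 t1 `` {z} = S_equiv t0 t1 `` {z'} \<longleftrightarrow> (z, z') \<in> Erel t0 t1" for z z'
    using c0 unfolding S_equiv_char .
  have "(A, B) \<in> S_edges \<eta> t0 t1 \<longleftrightarrow> (\<exists>j u v. (u, v) \<in> \<eta> \<and> A = S_equiv t0 t1 `` {(j, u)} \<and> B = S_equiv t0 t1 `` {(j, v)})" for A B
    unfolding S_edges_def by blast
  then show ?thesis using c by simp
qed

lemma div_bound: fixes x y m :: nat assumes "0 < m" "x div m \<le> y div m + 1" shows "x < y + 2 * m"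
proof -
  have d: "x div m * m + x mod m = x" by (rule div_mult_mod_eq)
  have "x mod m < m" using assms by simp
  moreover have "(x div m + 1) * m = x div m * m + m" by (simp add: algebra_simps)
  ultimately have "x < (x div m + 1) * m" using d by linarith
  also have "\<dots> \<le> (y div m + 2) * m" using assms(2) by (intro mult_right_mono) auto
  also have "\<dots> = y div m * m + 2 * m" by (simp add: algebra_simps)
  also have "\<dots> \<le> y + 2 * m" using div_mult_mod_eq[of y m] by linarith
  finally show ?thesis .
qed

context
  fixes T :: "'a set" and \<eta> :: "('a \<times> 'a) set" and t0 t1 :: 'a and e :: "nat \<Rightarrow> 'a" and m :: nat
  assumes m0: "0 < m" and ebij: "bij_betw e {..<m} (T - {t0})"
begin

abbreviation "E \<equiv> Erel t0 t1"
abbreviation "P \<equiv> pp e m t0"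
abbreviation "ed \<equiv> edge \<eta> e m t0 t1"

lemma pp_snd: "1 \<le> k \<Longrightarrow> snd (P k) \<noteq> t0"
  using ebij m0 unfolding pp_def bij_betw_def by auto

lemma pp_fst: "1 \<le> k \<Longrightarrow> fst (P k) = (k - 1) div m"
  unfolding pp_def by simp

lemma pp_shift: "1 \<le> k \<Longrightarrow> P (k + m) = (Suc (fst (P k)), snd (P k))"
proof -
  assume k: "1 \<le> k"
  then obtain k' where k': "k = Suc k'" by (cases k) auto
  show ?thesis using m0 unfolding pp_def k' by (simp add: div_add_self2)
qed

lemma shiftE: assumes "1 \<le> k" shows "(P (k + m), (Suc j, u)) \<in> E \<longleftrightarrow> (P k, (j, u)) \<in> E"
proof -
  obtain i t where it: "P k = (i, t)" by (cases "P k")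
  then have "P (k + m) = (Suc i, t)" using pp_shift[OF assms] by simp
  then show ?thesis using it Erel_shift by simp
qed

lemma Ej: "snd x \<noteq> t0 \<Longrightarrow> (x, (j, u)) \<in> E \<Longrightarrow> j = fst x \<or> j = Suc (fst x)"
  by (cases x) (auto simp: Erel_def)

lemma E0: "((0, t0), (j, u)) \<in> E \<Longrightarrow> 1 \<le> j \<Longrightarrow> t0 = t1 \<and> u = t0"
  by (auto simp: Erel_def)

lemma B: assumes "1 \<le> k" "1 \<le> l" "ed k l" shows "k < l + 2 * m \<and> l < k + 2 * m"
proof -
  obtain j u v where "(P k, (j, u)) \<in> E" "(P l, (j, v)) \<in> E"
    using assms(3) unfolding edge_def by blast
  then have "j = (k - 1) div m \<or> j = Suc ((k - 1) div m)" "j = (l - 1) div m \<or> j = Suc ((l - 1) div m)"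
    using Ej[OF pp_snd[OF assms(1)]] Ej[OF pp_snd[OF assms(2)]] pp_fst assms(1,2) by auto
  then have "(k - 1) div m \<le> (l - 1) div m + 1" "(l - 1) div m \<le> (k - 1) div m + 1" by auto
  then have "k - 1 < l - 1 + 2 * m" "l - 1 < k - 1 + 2 * m" using div_bound m0 by blast+
  then show ?thesis using assms(1,2) by linarith
qed

lemma A: assumes "1 \<le> k" "1 \<le> l" shows "ed (k + m) (l + m) \<longleftrightarrow> ed k l"
proof
  assume "ed k l"
  then obtain j u v where h: "(u, v) \<in> \<eta>" "(P k, (j, u)) \<in> E" "(P l, (j, v)) \<in> E"
    unfolding edge_def by blast
  have "(P (k + m), (Suc j, u)) \<in> E" "(P (l + m), (Suc j, v)) \<in> E"
    using h shiftE assms by auto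
  then show "ed (k + m) (l + m)" using h(1) unfolding edge_def by blast
next
  assume "ed (k + m) (l + m)"
  then obtain j u v where h: "(u, v) \<in> \<eta>" "(P (k + m), (j, u)) \<in> E" "(P (l + m), (j, v)) \<in> E"
    unfolding edge_def by blast
  have sk: "snd (P (k + m)) \<noteq> t0" using pp_snd assms by simp
  have "j = fst (P (k + m)) \<or> j = Suc (fst (P (k + m)))" using Ej[OF sk h(2)] .
  then obtain j' where j': "j = Suc j'" using pp_shift assms by auto
  have "(P k, (j', u)) \<in> E" "(P l, (j', v)) \<in> E"
    using h shiftE assms j' by auto
  then show "ed k l" using h(1) unfolding edge_def by blast
qed

lemma C: assumes "m < l" shows "ed 0 (l + m) \<longleftrightarrow> ed 0 l" "ed (l + m) 0 \<longleftrightarrow> ed l 0"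
proof -
  have l1: "1 \<le> l" using assms by simp
  have "m div m \<le> (l - 1) div m" using assms by (intro div_le_mono) simp
  then have f1: "1 \<le> fst (P l)" using m0 pp_fst[OF l1] by simp
  have sl: "snd (P l) \<noteq> t0" using pp_snd l1 by simp
  have sl': "snd (P (l + m)) \<noteq> t0" using pp_snd l1 by simp
  have P0: "P 0 = (0, t0)" by (simp add: pp_def)
  have fwd: "(P 0, (j, u)) \<in> E \<and> (P l, (j, v)) \<in> E \<Longrightarrow> (P 0, (Suc j, u)) \<in> E \<and> (P (l + m), (Suc j, v)) \<in> E" for j u v
  proof -
    assume h: "(P 0, (j, u)) \<in> E \<and> (P l, (j, v)) \<in> E"
    have "j = fst (P l) \<or> j = Suc (fst (P l))" using Ej[OF sl] h by blast
    then have "1 \<le> j" using f1 by auto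
    moreover have "((0, t0), (j, u)) \<in> E" using h P0 by simp
    ultimately have "t0 = t1 \<and> u = t0" using E0 by blast
    then have "(P 0, (Suc j, u)) \<in> E" using P0 by (simp add: Erel_def)
    moreover have "(P (l + m), (Suc j, v)) \<in> E" using h shiftE l1 by auto
    ultimately show ?thesis by blast
  qed
  have bwd: "(P 0, (j, u)) \<in> E \<and> (P (l + m), (j, v)) \<in> E \<Longrightarrow> \<exists>j'. (P 0, (j', u)) \<in> E \<and> (P l, (j', v)) \<in> E" for j u v
  proof -
    assume h: "(P 0, (j, u)) \<in> E \<and> (P (l + m), (j, v)) \<in> E"
    have "j = fst (P (l + m)) \<or> j = Suc (fst (P (l + m)))" using Ej[OF sl'] h by blast
    then obtain j' where j': "j = Suc j'" using pp_shift l1 by auto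
    have "1 \<le> j" using j' by simp
    moreover have "((0, t0), (j, u)) \<in> E" using h P0 by simp
    ultimately have "t0 = t1 \<and> u = t0" using E0 by blast
    then have "(P 0, (j', u)) \<in> E" using P0 by (simp add: Erel_def)
    moreover have "(P l, (j', v)) \<in> E" using h shiftE l1 j' by auto
    ultimately show ?thesis by blast
  qed
  show "ed 0 (l + m) \<longleftrightarrow> ed 0 l"
  proof
    assume "ed 0 (l + m)"
    then obtain j u v where "(u, v) \<in> \<eta>" "(P 0, (j, u)) \<in> E" "(P (l + m), (j, v)) \<in> E"
      unfolding edge_def by blast
    then show "ed 0 l" using bwd[of j u v] unfolding edge_def by blast
  next
    assume "ed 0 l"
    then obtain j u v where "(u, v) \<in> \<eta>" "(P 0, (j, u)) \<in> E" "(P l, (j, v)) \<in> E"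
      unfolding edge_def by blast
    then show "ed 0 (l + m)" using fwd[of j u v] unfolding edge_def by blast
  qed
  show "ed (l + m) 0 \<longleftrightarrow> ed l 0"
  proof
    assume "ed (l + m) 0"
    then obtain j u v where "(u, v) \<in> \<eta>" "(P 0, (j, v)) \<in> E" "(P (l + m), (j, u)) \<in> E"
      unfolding edge_def by blast
    then show "ed l 0" using bwd[of j v u] unfolding edge_def by blast
  next
    assume "ed l 0"
    then obtain j u v where "(u, v) \<in> \<eta>" "(P 0, (j, v)) \<in> E" "(P l, (j, u)) \<in> E"
      unfolding edge_def by blast
    then show "ed (l + m) 0" using fwd[of j v u] unfolding edge_def by blast
  qed
qed

lemma A_iter: "1 \<le> k \<Longrightarrow> 1 \<le> l \<Longrightarrow> ed (k + t * m) (l + t * m) \<longleftrightarrow> ed k l"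
proof (induction t)
  case 0 then show ?case by simp
next
  case (Suc t)
  have "ed (k + Suc t * m) (l + Suc t * m) = ed (k + t * m + m) (l + t * m + m)" by (simp add: algebra_simps)
  also have "\<dots> = ed (k + t * m) (l + t * m)" using A Suc.prems by simp
  finally show ?case using Suc by simp
qed

lemma C_iter: "m < l \<Longrightarrow> (ed 0 (l + t * m) \<longleftrightarrow> ed 0 l) \<and> (ed (l + t * m) 0 \<longleftrightarrow> ed l 0)"
proof (induction t)
  case 0 then show ?case by simp
next
  case (Suc t)
  have e: "l + Suc t * m = l + t * m + m" by (simp add: algebra_simps)
  have "m < l + t * m" using Suc.prems by simp
  then show ?case using C[of "l + t * m"] Suc unfolding e by simp
qed


lemma cong_shift: fixes x y :: nat assumes "x mod m = y mod m" "x \<le> y" shows "\<exists>t. y = x + t * m"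
proof -
  have "y mod m = x mod m" using assms(1) by simp
  then have "m dvd y - x" using mod_eq_dvd_iff_nat[OF assms(2)] by blast
  then obtain t where "y - x = m * t" by blast
  then have "y = x + t * m" using assms(2) by (simp add: algebra_simps)
  then show ?thesis by blast
qed

lemma inv1:
  assumes K: "key (3 * m) m k l = key (3 * m) m k' l'" and ekl: "ed k l"
  shows "ed k' l'"
proof -
  define N where "N = 3 * m"
  have N0: "0 < N" using m0 by (simp add: N_def)
  have q1: "min k l = min k' l' \<or> (N \<le> min k l \<and> N \<le> min k' l' \<and> min k l mod m = min k' l' mod m)"
   and q2: "k - l = k' - l' \<or> (N \<le> k - l \<and> N \<le> k' - l' \<and> (k - l) mod m = (k' - l') mod m)"
   and q3: "l - k = l' - k' \<or> (N \<le> l - k \<and> N \<le> l' - k' \<and> (l - k) mod m = (l' - k') mod m)"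
  proof -
    have c: "cyc N m (min k l) = cyc N m (min k' l')" "cyc N m (k - l) = cyc N m (k' - l')"
      "cyc N m (l - k) = cyc N m (l' - k')" using K by (simp_all add: key_def N_def)
    show "min k l = min k' l' \<or> (N \<le> min k l \<and> N \<le> min k' l' \<and> min k l mod m = min k' l' mod m)"
      using c(1) unfolding cyc_eq .
    show "k - l = k' - l' \<or> (N \<le> k - l \<and> N \<le> k' - l' \<and> (k - l) mod m = (k' - l') mod m)"
      using c(2) unfolding cyc_eq .
    show "l - k = l' - k' \<or> (N \<le> l - k \<and> N \<le> l' - k' \<and> (l - k) mod m = (l' - k') mod m)"
      using c(3) unfolding cyc_eq .
  qed
  show ?thesis
  proof (cases "k = 0")
    case True
    have "min k' l' = 0" using q1 True N0 by auto
    moreover have "k' - l' = 0" using q2 True N0 by auto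
    ultimately have k'0: "k' = 0" by linarith
    have "l = l' \<or> (N \<le> l \<and> N \<le> l' \<and> l mod m = l' mod m)" using q3 True k'0 by simp
    then show ?thesis
    proof
      assume "l = l'" then show ?thesis using True k'0 ekl by simp
    next
      assume h: "N \<le> l \<and> N \<le> l' \<and> l mod m = l' mod m"
      have ml: "m < l" "m < l'" using h m0 N_def by auto
      show ?thesis
      proof (cases "l \<le> l'")
        case True
        then obtain t where "l' = l + t * m" using cong_shift h by blast
        then show ?thesis using C_iter[OF ml(1), of t] ekl \<open>k = 0\<close> k'0 by simp
      next
        case False
        then obtain t where "l = l' + t * m" using cong_shift h by (metis nat_le_linear)
        then show ?thesis using C_iter[OF ml(2), of t] ekl \<open>k = 0\<close> k'0 by simp
      qed
    qed
  next
    case kpos: False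
    show ?thesis
    proof (cases "l = 0")
      case True
      have "min k' l' = 0" using q1 True N0 by auto
      moreover have "l' - k' = 0" using q3 True N0 by auto
      ultimately have l'0: "l' = 0" by linarith
      have "k = k' \<or> (N \<le> k \<and> N \<le> k' \<and> k mod m = k' mod m)" using q2 True l'0 by simp
      then show ?thesis
      proof
        assume "k = k'" then show ?thesis using True l'0 ekl by simp
      next
        assume h: "N \<le> k \<and> N \<le> k' \<and> k mod m = k' mod m"
        have ml: "m < k" "m < k'" using h m0 N_def by auto
        show ?thesis
        proof (cases "k \<le> k'")
          case True
          then obtain t where "k' = k + t * m" using cong_shift h by blast
          then show ?thesis using C_iter[OF ml(1), of t] ekl \<open>l = 0\<close> l'0 by simp
        next
          case False
          then obtain t where "k = k' + t * m" using cong_shift h by (metis nat_le_linear)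
          then show ?thesis using C_iter[OF ml(2), of t] ekl \<open>l = 0\<close> l'0 by simp
        qed
      qed
    next
      case lpos: False
      have k1: "1 \<le> k" "1 \<le> l" using kpos lpos by auto
      have "min k' l' \<noteq> 0" using q1 k1 N0 by auto
      then have k1': "1 \<le> k'" "1 \<le> l'" by auto
      have b: "k < l + 2 * m" "l < k + 2 * m" using B[OF k1 ekl] by auto
      have d1: "k' - l' = k - l" using q2 b N_def by auto
      have d2: "l' - k' = l - k" using q3 b N_def by auto
      have "min k l = min k' l' \<or> (N \<le> min k l \<and> N \<le> min k' l' \<and> min k l mod m = min k' l' mod m)"
        using q1 .
      then show ?thesis
      proof
        assume "min k l = min k' l'"
        then have "k = k'" "l = l'" using d1 d2 by (simp_all add: min_def split: if_splits; linarith)+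
        then show ?thesis using ekl by simp
      next
        assume h: "N \<le> min k l \<and> N \<le> min k' l' \<and> min k l mod m = min k' l' mod m"
        show ?thesis
        proof (cases "min k l \<le> min k' l'")
          case True
          then obtain t where t: "min k' l' = min k l + t * m" using cong_shift h by blast
          then have "k' = k + t * m" "l' = l + t * m" using d1 d2 by (simp_all add: min_def split: if_splits; linarith)+
          then show ?thesis using A_iter[OF k1, of t] ekl by simp
        next
          case False
          then obtain t where t: "min k l = min k' l' + t * m" using cong_shift h by (metis nat_le_linear)
          then have "k = k' + t * m" "l = l' + t * m" using d1 d2 by (simp_all add: min_def split: if_splits; linarith)+
          then show ?thesis using A_iter[OF k1', of t] ekl by simp
        qed
      qed
    qed
  qed
qed

end



lemma foldl_const0: "foldl (\<lambda>_ _. (0::nat)) 0 w = 0" by (induction w) auto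

lemma regular_UNIV: "regular (UNIV :: unary_letter list set)"
  unfolding regular_def
  by (rule exI[of _ "{0}"], rule exI[of _ 0], rule exI[of _ "\<lambda>_ _. 0"], rule exI[of _ "{0}"])
     (simp add: foldl_const0)

lemma conv_set: "{conv u v | u v. u \<in> (UNIV :: unary_letter list set) \<and> v \<in> UNIV \<and> Q (length u) (length v)}
   = {cv k l | k l. Q k l}"
proof (intro set_eqI iffI)
  fix w assume "w \<in> {conv u v | u v. u \<in> (UNIV :: unary_letter list set) \<and> v \<in> UNIV \<and> Q (length u) (length v)}"
  then obtain u v :: "unary_letter list" where "w = conv u v" "Q (length u) (length v)" by blast
  moreover have "conv u v = cv (length u) (length v)" using conv_rep unary_rep by metis
  ultimately show "w \<in> {cv k l | k l. Q k l}" by blast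
next
  fix w assume "w \<in> {cv k l | k l. Q k l}"
  then obtain k l where "w = cv k l" "Q k l" by blast
  then have "w = conv (replicate k a) (replicate l a) \<and> Q (length (replicate k a)) (length (replicate l a))"
    using conv_rep by simp
  then show "w \<in> {conv u v | u v. u \<in> (UNIV :: unary_letter list set) \<and> v \<in> UNIV \<and> Q (length u) (length v)}"
    by blast
qed

context
  fixes T :: "'a set" and \<eta> :: "('a \<times> 'a) set" and t0 t1 :: 'a and e :: "nat \<Rightarrow> 'a" and m :: nat
  assumes m0: "0 < m" and ebij: "bij_betw e {..<m} (T - {t0})" and t0T: "t0 \<in> T" and t1T: "t1 \<in> T"
begin

lemma cls_eq: "S_equiv t0 t1 `` {z} = S_equiv t0 t1 `` {z'} \<longleftrightarrow> (z, z') \<in> Erel t0 t1"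
proof -
  have c0: "S_equiv t0 t1 `` {z} = S_equiv t0 t1 `` {z'} \<longleftrightarrow> (z, z') \<in> S_equiv t0 t1"
    by (rule eq_equiv_class_iff[OF S_equiv_equiv]) simp_all
  then show ?thesis unfolding S_equiv_char .
qed

lemma P_inj: "(pp e m t0 k, pp e m t0 l) \<in> Erel t0 t1 \<Longrightarrow> k = l"
proof -
  assume h: "(pp e m t0 k, pp e m t0 l) \<in> Erel t0 t1"
  have sn: "snd (pp e m t0 k') \<noteq> t0" if "1 \<le> k'" for k' using pp_snd[OF m0 ebij that] .
  have inj: "inj_on e {..<m}" using ebij by (simp add: bij_betw_def)
  show "k = l"
  proof (cases "k = 0")
    case True
    show ?thesis
    proof (rule ccontr)
      assume "k \<noteq> l"
      then have "1 \<le> l" using True by simp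
      then show False using h True sn[of l] by (cases "pp e m t0 l") (auto simp: Erel_def pp_def)
    qed
  next
    case False
    show ?thesis
    proof (cases "l = 0")
      case True
      then show ?thesis using h False sn[of k] by (cases "pp e m t0 k") (auto simp: Erel_def pp_def)
    next
      case l0: False
      have "snd (pp e m t0 k) \<noteq> t0" "snd (pp e m t0 l) \<noteq> t0" using sn False l0 by auto
      then have "pp e m t0 k = pp e m t0 l" using h
        by (cases "pp e m t0 k"; cases "pp e m t0 l") (auto simp: Erel_def)
      then have d: "(k - 1) div m = (l - 1) div m" "e ((k - 1) mod m) = e ((l - 1) mod m)"
        using False l0 by (auto simp: pp_def)
      then have "(k - 1) mod m = (l - 1) mod m" using inj m0 by (auto dest: inj_onD)
      then have "k - 1 = l - 1" using d(1) by (metis div_mult_mod_eq)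
      then show ?thesis using False l0 by simp
    qed
  qed
qed

lemma main_pres:
  "unary_FA_presentable (S_vertices T t0 t1) (S_edges \<eta> t0 t1)"
proof -
  define \<phi> where "\<phi> = (\<lambda>u :: unary_letter list. S_equiv t0 t1 `` {pp e m t0 (length u)})"
  have pN: "m dvd 3 * m" and N0: "0 < 3 * m" using m0 by auto
  have surj: "\<phi> ` UNIV = S_vertices T t0 t1"
  proof (intro set_eqI iffI)
    fix X assume "X \<in> \<phi> ` UNIV"
    then obtain u where "X = \<phi> u" by blast
    then have X: "X = S_equiv t0 t1 `` {pp e m t0 (length u)}" unfolding \<phi>_def by simp
    have "pp e m t0 (length u) \<in> UNIV \<times> T"
      using t0T ebij m0 by (auto simp: pp_def bij_betw_def)
    then show "X \<in> S_vertices T t0 t1" unfolding S_vertices_def X by (rule quotientI)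
  next
    fix X assume "X \<in> S_vertices T t0 t1"
    then obtain j t where jt: "t \<in> T" "X = S_equiv t0 t1 `` {(j, t)}"
      unfolding S_vertices_def by (auto elim!: quotientE)
    have pe: "pp e m t0 (Suc (j' * m + i)) = (j', e i)" if "i < m" for i j'
      using that by (simp add: pp_def)
    have "\<exists>k. (pp e m t0 k, (j, t)) \<in> Erel t0 t1"
    proof (cases "t = t0")
      case False
      then obtain i where i: "i < m" "t = e i" using ebij jt(1) unfolding bij_betw_def by auto
      then show ?thesis using pe[OF i(1), of j] by (intro exI[of _ "Suc (j * m + i)"]) (simp add: Erel_def)
    next
      case True
      show ?thesis
      proof (cases j)
        case 0 then show ?thesis using True by (intro exI[of _ 0]) (simp add: pp_def Erel_def)
      next
        case (Suc j')
        show ?thesis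
        proof (cases "t0 = t1")
          case True then show ?thesis using \<open>t = t0\<close> by (intro exI[of _ 0]) (simp add: pp_def Erel_def)
        next
          case False
          then have "t1 \<in> e ` {..<m}" using ebij t1T unfolding bij_betw_def by simp
          then obtain i where i: "i < m" "t1 = e i" by blast
          then show ?thesis using pe[OF i(1), of j'] Suc \<open>t = t0\<close>
            by (intro exI[of _ "Suc (j' * m + i)"]) (simp add: Erel_def)
        qed
      qed
    qed
    then obtain k where "(pp e m t0 k, (j, t)) \<in> Erel t0 t1" by blast
    then have "S_equiv t0 t1 `` {pp e m t0 k} = S_equiv t0 t1 `` {(j, t)}" using cls_eq by blast
    then have "X = \<phi> (replicate k a)" using jt(2) by (simp add: \<phi>_def)
    then show "X \<in> \<phi> ` UNIV" by blast
  qed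
  have eqset: "{conv u v | u v. u \<in> UNIV \<and> v \<in> UNIV \<and> \<phi> u = \<phi> v} = {cv k l | k l. k = l}"
  proof -
    have "\<phi> u = \<phi> v \<longleftrightarrow> length u = length v" for u v
    proof
      assume "\<phi> u = \<phi> v"
      then show "length u = length v" unfolding \<phi>_def cls_eq by (rule P_inj)
    next
      assume "length u = length v"
      then show "\<phi> u = \<phi> v" unfolding \<phi>_def by simp
    qed
    then show ?thesis using conv_set[of "\<lambda>k l. k = l"] by simp
  qed
  have edset: "{conv u v | u v. u \<in> UNIV \<and> v \<in> UNIV \<and> (\<phi> u, \<phi> v) \<in> S_edges \<eta> t0 t1}
      = {cv k l | k l. edge \<eta> e m t0 t1 k l}"
  proof -
    have "(\<phi> u, \<phi> v) \<in> S_edges \<eta> t0 t1 \<longleftrightarrow> edge \<eta> e m t0 t1 (length u) (length v)" for u v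
      unfolding \<phi>_def edge_iff edge_def ..
    then show ?thesis using conv_set[of "edge \<eta> e m t0 t1"] by simp
  qed
  have r1: "regular {cv k l | k l. k = l}"
  proof (rule regular_cv[OF m0 pN N0])
    fix k l k' l' :: nat
    assume K: "key (3 * m) m k l = key (3 * m) m k' l'" and "k = l"
    then have "cyc (3 * m) m (k' - l') = cyc (3 * m) m 0" "cyc (3 * m) m (l' - k') = cyc (3 * m) m 0"
      by (simp_all add: key_def)
    moreover have "cyc (3 * m) m 0 = 0" using cyc_0[OF N0] by simp
    ultimately have "cyc (3 * m) m (k' - l') = 0" "cyc (3 * m) m (l' - k') = 0" by simp_all
    then show "k' = l'" using cyc_0[OF N0] by simp
  qed
  have r2: "regular {cv k l | k l. edge \<eta> e m t0 t1 k l}"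
    by (rule regular_cv[OF m0 pN N0]) (rule inv1[OF m0 ebij])
  show ?thesis unfolding unary_FA_presentable_def
  proof (intro exI conjI)
    show "regular (UNIV :: unary_letter list set)" by (rule regular_UNIV)
    show "\<phi> ` UNIV = S_vertices T t0 t1" by (rule surj)
    show "regular {conv u v |u v. u \<in> UNIV \<and> v \<in> UNIV \<and> \<phi> u = \<phi> v}" unfolding eqset by (rule r1)
    show "regular {conv u v |u v. u \<in> UNIV \<and> v \<in> UNIV \<and> (\<phi> u, \<phi> v) \<in> S_edges \<eta> t0 t1}"
      unfolding edset by (rule r2)
  qed
qed

end



theorem lemma6p5:
  fixes T :: "'a set" and \<eta> :: "('a \<times> 'a) set" and t0 t1 :: 'a
  assumes "shallow_star T \<eta> t0 t1 \<or> periodic_path T \<eta> t0 t1"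
  shows "unary_FA_presentable (S_vertices T t0 t1) (S_edges \<eta> t0 t1)"
proof -
  have tmp: "template T \<eta> t0 t1" using assms by (auto simp: shallow_star_def periodic_path_def)
  then have fin: "finite T" and irr: "irrefl \<eta>" and t0T: "t0 \<in> T" and t1T: "t1 \<in> T"
    and lf: "leaf T \<eta> t0"
    by (auto simp: template_def directed_tree_def)
  from lf have "card {u \<in> T. (u, t0) \<in> \<eta> \<or> (t0, u) \<in> \<eta>} = 1" by (simp add: leaf_def)
  then have "{u \<in> T. (u, t0) \<in> \<eta> \<or> (t0, u) \<in> \<eta>} \<noteq> {}" by (metis card.empty zero_neq_one)
  then obtain u where u: "u \<in> T" "(u, t0) \<in> \<eta> \<or> (t0, u) \<in> \<eta>" by blast
  have "u \<noteq> t0" using u(2) irr by (auto simp: irrefl_def)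
  then have ne: "T - {t0} \<noteq> {}" using u(1) by blast
  define m where "m = card (T - {t0})"
  have m0: "0 < m" using ne fin by (simp add: m_def card_gt_0_iff)
  obtain e where "bij_betw e {0..<m} (T - {t0})"
    using ex_bij_betw_nat_finite[of "T - {t0}"] fin unfolding m_def by auto
  then have eb: "bij_betw e {..<m} (T - {t0})" by (simp add: atLeast0LessThan)
  show ?thesis by (rule main_pres[OF m0 eb t0T t1T])
qed

end
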